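(* Let $n\ge2$, let $\mathcal{C}_i^X$ denote the set of maximal flags of $\mathrm{PG}(n,q)$ of type $i$ with respect to the point $X$. Then for all $i,j\in[n+1]$ and points $X,Y$, $$|\mathcal{C}_i^X\cap\mathcal{C}_j^Y|=\begin{cases}\delta_{ij}\,c(n-1)\,q^{i-1}&\text{if }X=Y,\\ c(n-2)\,q^{i-2}(q^{j-1}-\delta_{ij})&\text{if }X\neq Y.\end{cases}$$
   Context: A maximal flag of $\mathrm{PG}(n,q)$ is $(U_1,\dots,U_n)$ with $U_1\subset\cdots\subset U_n$ subspaces of $\mathbb{F}_q^{n+1}$, $\dim U_i=i$. Its type with respect to a point $X$ is the smallest $k\in[n]$ with $X\subseteq U_k$, and $n+1$ otherwise. $v(k)=\frac{q^{k+1}-1}{q-1}$ is the number of points of $\mathrm{PG}(k,q)$ and $c(k)=\prod_{i=1}^k v(i)$ is the number of maximal flags of $\mathrm{PG}(k,q)$ (with $c(0)=1$). *)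

theory Defs
  imports "HOL-Analysis.Analysis"
begin

text \<open>The projective space PG(n,q) is modelled on the vector space 'a^'b over a
finite field 'a (q = CARD('a)) with CARD('b) = n+1. Subspaces and dimensions
are the library notions vec.subspace / vec.dim for scalar multiplication (*s).\<close>

definition pg_points :: "('a::{field,finite} ^ 'b) set set" where
  "pg_points = {X. vec.subspace X \<and> vec.dim X = 1}"

text \<open>Outside the index range [1,n] the function is
set to the empty set so that each flag has a unique representative.\<close>

definition max_flags :: "(nat \<Rightarrow> ('a::{field,finite} ^ 'b) set) set" where
  "max_flags = {U. (\<forall>i\<in>{1..CARD('b) - 1}. vec.subspace (U i) \<and> vec.dim (U i) = i)
                 \<and> (\<forall>i\<in>{1..<CARD('b) - 1}. U i \<subseteq> U (Suc i))
                 \<and> (\<forall>i. i \<notin> {1..CARD('b) - 1} \<longrightarrow> U i = {})}"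

definition flag_type :: "('a::{field,finite} ^ 'b) set \<Rightarrow> (nat \<Rightarrow> ('a ^ 'b) set) \<Rightarrow> nat" where
  "flag_type X U =
     (if \<exists>k\<in>{1..CARD('b) - 1}. X \<subseteq> U k
      then LEAST k. k \<in> {1..CARD('b) - 1} \<and> X \<subseteq> U k
      else CARD('b))"

definition flags_of_type :: "nat \<Rightarrow> ('a::{field,finite} ^ 'b) set \<Rightarrow> (nat \<Rightarrow> ('a ^ 'b) set) set" where
  "flags_of_type i X = {U \<in> max_flags. flag_type X U = i}"

definition pg_v :: "nat \<Rightarrow> nat \<Rightarrow> nat" where
  "pg_v q k = (q ^ (k + 1) - 1) div (q - 1)"

definition pg_c :: "nat \<Rightarrow> nat \<Rightarrow> nat" where
  "pg_c q k = (\<Prod>i=1..k. pg_v q i)"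

end

theory Submission
  imports Defs
begin


lemma card_span_insert:
  fixes a :: "'a::{field,finite}^'b" and S :: "('a^'b) set"
  assumes a: "a \<notin> vec.span S"
  shows "card (vec.span (insert a S)) = CARD('a) * card (vec.span S)"
proof -
  have eq: "vec.span (insert a S) = (\<lambda>(k,y). k *s a + y) ` (UNIV \<times> vec.span S)"
  proof
    show "vec.span (insert a S) \<subseteq> (\<lambda>(k,y). k *s a + y) ` (UNIV \<times> vec.span S)"
    proof
      fix x assume "x \<in> vec.span (insert a S)"
      then obtain k where "x - k *s a \<in> vec.span S" using vec.span_breakdown_eq by blast
      then show "x \<in> (\<lambda>(k,y). k *s a + y) ` (UNIV \<times> vec.span S)"
        by (intro image_eqI[of _ _ "(k, x - k *s a)"]) auto
    qed
  next
    show "(\<lambda>(k,y). k *s a + y) ` (UNIV \<times> vec.span S) \<subseteq> vec.span (insert a S)"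
    proof clarify
      fix k y assume "y \<in> vec.span S"
      then have "y \<in> vec.span (insert a S)" using vec.span_mono[of S "insert a S"] by blast
      then show "k *s a + y \<in> vec.span (insert a S)"
        using vec.span_add[OF vec.span_scale[OF vec.span_base[of a "insert a S"]]] by auto
    qed
  qed
  have inj: "inj_on (\<lambda>(k,y). k *s a + y) (UNIV \<times> vec.span S)"
  proof (rule inj_onI, clarsimp)
    fix k y k' y'
    assume y: "y \<in> vec.span S" and y': "y' \<in> vec.span S" and e: "k *s a + y = k' *s a + y'"
    show "k = k' \<and> y = y'"
    proof (cases "k = k'")
      case True then show ?thesis using e by simp
    next
      case False
      have "(k - k') *s a = y' - y" using e by (simp add: algebra_simps vector_sadd_rdistrib vector_sub_rdistrib)
      then have "inverse (k - k') *s ((k - k') *s a) = inverse (k - k') *s (y' - y)" by simp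
      then have "a = inverse (k - k') *s (y' - y)" using False by (simp only: vector_smult_assoc) simp
      moreover have "inverse (k - k') *s (y' - y) \<in> vec.span S"
        by (intro vec.span_scale vec.span_diff y y')
      ultimately show ?thesis using a by simp
    qed
  qed
  show ?thesis unfolding eq by (simp add: card_image[OF inj] card_cartesian_product)
qed

lemma card_span_indep:
  fixes B :: "('a::{field,finite}^'b) set"
  assumes "vec.independent B"
  shows "card (vec.span B) = CARD('a) ^ card B"
proof -
  have "finite B" using vec.finiteI_independent[OF assms] .
  then show ?thesis using assms
  proof (induction B rule: finite_induct)
    case empty then show ?case by simp
  next
    case (insert b B)
    then have "vec.independent B" "b \<notin> vec.span B" using vec.independent_insert[of b B] by auto
    then show ?case using insert card_span_insert[of b B] by simp
  qed
qed

lemma card_subspace: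
  fixes S :: "('a::{field,finite}^'b) set"
  assumes "vec.subspace S"
  shows "card S = CARD('a) ^ vec.dim S"
proof -
  obtain B where B: "B \<subseteq> S" "vec.independent B" "S \<subseteq> vec.span B" "card B = vec.dim S"
    using vec.basis_exists by blast
  have "vec.span B = S" using B vec.span_minimal[OF B(1) assms] by auto
  then show ?thesis using card_span_indep[OF B(2)] B(4) by simp
qed

lemma dim_span_insert_notin:
  fixes A :: "('a::{field,finite}^'b) set"
  assumes "v \<notin> vec.span A"
  shows "vec.dim (vec.span (insert v A)) = Suc (vec.dim A)"
  using assms by (simp add: vec.dim_insert)

lemma card_field_ge2: "CARD('a::{field,finite}) \<ge> 2"
proof -
  have "card {0::'a, 1} \<le> CARD('a)" by (rule card_mono) auto
  then show ?thesis by simp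
qed

lemma point_obtain:
  fixes X :: "('a::{field,finite}^'b) set"
  assumes "X \<in> pg_points"
  obtains x where "x \<noteq> 0" "X = vec.span {x}"
proof -
  have S: "vec.subspace X" and d: "vec.dim X = 1" using assms by (auto simp: pg_points_def)
  obtain B where B: "B \<subseteq> X" "vec.independent B" "X \<subseteq> vec.span B" "card B = vec.dim X"
    using vec.basis_exists by blast
  obtain x where Bx: "B = {x}" using B(4) d card_1_singletonE by auto
  have "vec.span B = X" using B vec.span_minimal[OF B(1) S] by auto
  moreover have "x \<noteq> 0" using B(2) Bx by auto
  ultimately show ?thesis using that Bx by auto
qed

lemma point_span:
  fixes x :: "'a::{field,finite}^'b"
  assumes "x \<noteq> 0"
  shows "vec.span {x} \<in> pg_points"
proof -
  have "vec.independent {x}" using assms by simp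
  then show ?thesis unfolding pg_points_def using vec.dim_span_eq_card_independent by fastforce
qed

lemma sub_span_iff:
  fixes x :: "'a::{field,finite}^'b"
  assumes "vec.subspace W"
  shows "vec.span {x} \<subseteq> W \<longleftrightarrow> x \<in> W"
  using assms vec.span_minimal[of "{x}" W] vec.span_base[of x "{x}"] by auto

definition covers_in :: "('a::{field,finite}^'b) set \<Rightarrow> ('a^'b) set \<Rightarrow> ('a^'b) set set" where
  "covers_in A S = {W. vec.subspace W \<and> A \<subseteq> W \<and> W \<subseteq> S \<and> vec.dim W = Suc (vec.dim A)}"

lemma cover_unique:
  fixes A :: "('a::{field,finite}^'b) set"
  assumes A: "vec.subspace A" and W: "W \<in> covers_in A S" and v: "v \<in> W" "v \<notin> A"
  shows "W = vec.span (insert v A)"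
proof -
  have W': "vec.subspace W" "A \<subseteq> W" "vec.dim W = Suc (vec.dim A)" using W by (auto simp: covers_in_def)
  have sub: "vec.span (insert v A) \<subseteq> W" using W' v by (intro vec.span_minimal) auto
  have "v \<notin> vec.span A" using v A vec.span_eq_iff[of A] by metis
  then have "vec.dim (vec.span (insert v A)) = vec.dim W" using dim_span_insert_notin W' by simp
  then show ?thesis using vec.subspace_dim_equal[OF vec.subspace_span W'(1) sub] by simp
qed

lemma span_insert_cover:
  fixes A :: "('a::{field,finite}^'b) set"
  assumes A: "vec.subspace A" and S: "vec.subspace S" "A \<subseteq> S" and v: "v \<in> S" "v \<notin> A"
  shows "vec.span (insert v A) \<in> covers_in A S"
proof -
  have "v \<notin> vec.span A" using v A vec.span_eq_iff[of A] by metis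
  then show ?thesis unfolding covers_in_def
    using dim_span_insert_notin[of v A] vec.span_minimal[of "insert v A" S] S v
      vec.span_superset[of "insert v A"] by auto
qed

fun gg :: "nat \<Rightarrow> nat \<Rightarrow> nat" where
  "gg q 0 = 0"
| "gg q (Suc m) = 1 + q * gg q m"

lemma gg_eq: "q \<ge> 1 \<Longrightarrow> (q - 1) * gg q m = q ^ m - 1"
proof (induction m)
  case 0 then show ?case by simp
next
  case (Suc m)
  have "q ^ m \<ge> 1" using Suc.prems by simp
  have "(q - 1) * gg q (Suc m) = (q - 1) + q * ((q - 1) * gg q m)" by (simp add: algebra_simps)
  also have "\<dots> = (q - 1) + q * (q ^ m - 1)" using Suc by simp
  also have "\<dots> = q ^ Suc m - 1" using Suc.prems \<open>q ^ m \<ge> 1\<close>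
    by (simp add: algebra_simps diff_mult_distrib2)
  finally show ?case .
qed

lemma card_covers_in:
  fixes A S :: "('a::{field,finite}^'b) set"
  assumes A: "vec.subspace A" and S: "vec.subspace S" "A \<subseteq> S"
  shows "card (covers_in A S) = gg CARD('a) (vec.dim S - vec.dim A)"
proof -
  let ?q = "CARD('a)"
  let ?C = "covers_in A S"
  have q2: "?q \<ge> 2" by (rule card_field_ge2)
  have dle: "vec.dim A \<le> vec.dim S" using vec.dim_subset[OF S(2)] .
  have union: "S - A = (\<Union>W\<in>?C. W - A)"
  proof
    show "S - A \<subseteq> (\<Union>W\<in>?C. W - A)"
    proof
      fix v assume v: "v \<in> S - A"
      then have "vec.span (insert v A) \<in> ?C" using span_insert_cover[OF A S] by auto
      moreover have "v \<in> vec.span (insert v A) - A" using v vec.span_base[of v "insert v A"] by auto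
      ultimately show "v \<in> (\<Union>W\<in>?C. W - A)" by blast
    qed
  next
    show "(\<Union>W\<in>?C. W - A) \<subseteq> S - A" by (auto simp: covers_in_def)
  qed
  have cardW: "card (W - A) = ?q ^ Suc (vec.dim A) - ?q ^ vec.dim A" if "W \<in> ?C" for W
    using that card_subspace[OF A] card_subspace[of W]
    by (subst card_Diff_subset) (auto simp: covers_in_def)
  have "card (S - A) = (\<Sum>W\<in>?C. card (W - A))"
    unfolding union
  proof (rule card_UN_disjoint)
    show "finite ?C" by (rule finite_subset[OF subset_UNIV]) simp
    show "\<forall>W\<in>?C. finite (W - A)" by (simp add: finite_subset[OF subset_UNIV])
    show "\<forall>W\<in>?C. \<forall>W'\<in>?C. W \<noteq> W' \<longrightarrow> (W - A) \<inter> (W' - A) = {}"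
    proof (intro ballI impI)
      fix W W' assume W: "W \<in> ?C" and W': "W' \<in> ?C" and ne: "W \<noteq> W'"
      show "(W - A) \<inter> (W' - A) = {}"
      proof (rule ccontr)
        assume "(W - A) \<inter> (W' - A) \<noteq> {}"
        then obtain v where v: "v \<in> W" "v \<in> W'" "v \<notin> A" by blast
        have "W = vec.span (insert v A)" by (rule cover_unique[OF A W v(1) v(3)])
        moreover have "W' = vec.span (insert v A)" by (rule cover_unique[OF A W' v(2) v(3)])
        ultimately show False using ne by simp
      qed
    qed
  qed
  also have "\<dots> = card ?C * (?q ^ Suc (vec.dim A) - ?q ^ vec.dim A)"
    using cardW by simp
  finally have e1: "card ?C * (?q ^ Suc (vec.dim A) - ?q ^ vec.dim A) = ?q ^ vec.dim S - ?q ^ vec.dim A"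
    using card_Diff_subset[of A S] S card_subspace[OF A] card_subspace[OF S(1)] by simp
  have e2: "?q ^ Suc (vec.dim A) - ?q ^ vec.dim A = ?q ^ vec.dim A * (?q - 1)"
    by (simp add: algebra_simps diff_mult_distrib2)
  have e3: "?q ^ vec.dim S - ?q ^ vec.dim A = ?q ^ vec.dim A * ((?q - 1) * gg ?q (vec.dim S - vec.dim A))"
    using gg_eq[of ?q "vec.dim S - vec.dim A"] q2 dle
    by (simp add: diff_mult_distrib2 power_add[symmetric])
  have "?q ^ vec.dim A * (?q - 1) > 0" using q2 by simp
  moreover have "card ?C * (?q ^ vec.dim A * (?q - 1)) = gg ?q (vec.dim S - vec.dim A) * (?q ^ vec.dim A * (?q - 1))"
    using e1 e2 e3 by (simp only: mult_ac)
  ultimately show ?thesis by simp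
qed



definition prevU :: "('a::{field,finite}^'b) set list \<Rightarrow> nat \<Rightarrow> ('a^'b) set" where
  "prevU xs t = (if t = 0 then {0} else xs ! (t - 1))"

definition lastU :: "('a::{field,finite}^'b) set list \<Rightarrow> ('a^'b) set" where
  "lastU xs = prevU xs (length xs)"

fun chs :: "(nat \<Rightarrow> ('a::{field,finite}^'b) set \<Rightarrow> bool) \<Rightarrow> nat \<Rightarrow> ('a^'b) set list set" where
  "chs P 0 = {[]}"
| "chs P (Suc k) = (\<lambda>(xs, W). xs @ [W]) ` (SIGMA xs:chs P k. {W \<in> covers_in (lastU xs) UNIV. P k W})"

lemma chs_length: "xs \<in> chs P k \<Longrightarrow> length xs = k"
  by (induction k arbitrary: xs) auto

lemma chs_card:
  assumes "\<And>k xs. k < K \<Longrightarrow> xs \<in> chs P k \<Longrightarrow> card {W \<in> covers_in (lastU xs) UNIV. P k W} = m k"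
  shows "card (chs P K) = (\<Prod>k<K. m k)"
  using assms
proof (induction K)
  case 0 then show ?case by simp
next
  case (Suc K)
  have inj: "inj_on (\<lambda>(xs, W). xs @ [W]) X" for X :: "(('a^'b) set list \<times> ('a^'b) set) set"
    by (rule inj_onI) auto
  have fin: "finite (chs P K)"
  proof -
    have "chs P K \<subseteq> {xs. set xs \<subseteq> UNIV \<and> length xs = K}" using chs_length by blast
    then show ?thesis using finite_lists_length_eq[of "UNIV :: ('a^'b) set set" K]
      by (simp add: finite_subset)
  qed
  have "card (chs P (Suc K)) = card (SIGMA xs:chs P K. {W \<in> covers_in (lastU xs) UNIV. P K W})"
    by (simp add: card_image[OF inj])
  also have "\<dots> = (\<Sum>xs\<in>chs P K. card {W \<in> covers_in (lastU xs) UNIV. P K W})"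
    by (rule card_SigmaI[OF fin]) (simp add: finite_subset[OF subset_UNIV])
  also have "\<dots> = (\<Sum>xs\<in>chs P K. m K)" using Suc.prems by simp
  also have "\<dots> = card (chs P K) * m K" by simp
  also have "card (chs P K) = (\<Prod>k<K. m k)" using Suc by simp
  finally show ?case by simp
qed

lemma prevU_append:
  "t \<le> length xs \<Longrightarrow> prevU (xs @ [W]) t = prevU xs t"
  by (auto simp: prevU_def nth_append)

lemma chs_char:
  "xs \<in> chs P k \<longleftrightarrow> length xs = k \<and> (\<forall>t<k. xs ! t \<in> covers_in (prevU xs t) UNIV \<and> P t (xs ! t))"
proof (induction k arbitrary: xs)
  case 0 then show ?case by simp
next
  case (Suc k)
  show ?case
  proof
    assume "xs \<in> chs P (Suc k)"
    then obtain ys W where xs: "xs = ys @ [W]" and ys: "ys \<in> chs P k"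
      and W: "W \<in> covers_in (lastU ys) UNIV" "P k W" by auto
    have ly: "length ys = k" using ys chs_length by blast
    show "length xs = Suc k \<and> (\<forall>t<Suc k. xs ! t \<in> covers_in (prevU xs t) UNIV \<and> P t (xs ! t))"
    proof (rule conjI)
      show "length xs = Suc k" using xs ly by simp
    next
      show "\<forall>t<Suc k. xs ! t \<in> covers_in (prevU xs t) UNIV \<and> P t (xs ! t)"
      proof (intro allI impI)
      fix t assume t: "t < Suc k"
      show "xs ! t \<in> covers_in (prevU xs t) UNIV \<and> P t (xs ! t)"
      proof (cases "t < k")
        case True
        then show ?thesis using Suc.IH[of ys] ys xs ly prevU_append[of t ys W]
          by (auto simp: nth_append)
      next
        case False
        then have "t = k" using t by simp
        then show ?thesis using W xs ly prevU_append[of t ys W] by (simp add: lastU_def nth_append)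
      qed
      qed
    qed
  next
    assume H: "length xs = Suc k \<and> (\<forall>t<Suc k. xs ! t \<in> covers_in (prevU xs t) UNIV \<and> P t (xs ! t))"
    define ys where "ys = butlast xs"
    define W where "W = last xs"
    have xs: "xs = ys @ [W]" using H unfolding ys_def W_def
      by (metis append_butlast_last_id list.size(3) nat.simps(3))
    have ly: "length ys = k" using H by (simp add: ys_def)
    have "ys \<in> chs P k"
      unfolding Suc.IH
    proof (rule conjI)
      show "length ys = k" by (rule ly)
    next
      show "\<forall>t<k. ys ! t \<in> covers_in (prevU ys t) UNIV \<and> P t (ys ! t)"
      proof (intro allI impI)
      fix t assume t: "t < k"
      then have "t < Suc k" by simp
      then have "xs ! t \<in> covers_in (prevU xs t) UNIV \<and> P t (xs ! t)" using H by blast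
      then show "ys ! t \<in> covers_in (prevU ys t) UNIV \<and> P t (ys ! t)"
        using t xs ly prevU_append[of t ys W] by (simp add: nth_append)
      qed
    qed
    moreover have "W \<in> covers_in (lastU ys) UNIV" "P k W"
      using H xs ly prevU_append[of k ys W] by (auto simp: nth_append lastU_def)
    ultimately show "xs \<in> chs P (Suc k)" using xs by auto
  qed
qed

lemma chs_last:
  assumes "xs \<in> chs P k"
  shows "vec.subspace (lastU xs) \<and> vec.dim (lastU xs) = k \<and> (k > 0 \<longrightarrow> P (k - 1) (lastU xs))"
  using assms
proof (induction k arbitrary: xs)
  case 0 then show ?case by (simp add: lastU_def prevU_def vec.subspace_0)
next
  case (Suc k)
  then obtain ys W where xs: "xs = ys @ [W]" and ys: "ys \<in> chs P k"
    and W: "W \<in> covers_in (lastU ys) UNIV" "P k W" by auto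
  have "lastU xs = W" using xs by (simp add: lastU_def prevU_def)
  then show ?case using W Suc.IH[OF ys] by (auto simp: covers_in_def)
qed



lemma dim_zero_set: "vec.dim {0::'a::{field,finite}^'b} = 0"
  using vec.dim_insert[of "0::'a^'b" "{}"] by simp

lemma chs_dim:
  assumes "xs \<in> chs P k" "t < k"
  shows "vec.dim (xs ! t) = Suc t"
  using assms(2)
proof (induction t)
  case 0
  then have "xs ! 0 \<in> covers_in (prevU xs 0) UNIV" using assms(1) chs_char by blast
  then show ?case by (simp add: covers_in_def prevU_def dim_zero_set)
next
  case (Suc t)
  then have "xs ! Suc t \<in> covers_in (prevU xs (Suc t)) UNIV" using assms(1) chs_char by blast
  then show ?case using Suc by (simp add: covers_in_def prevU_def)
qed

definition flag_list :: "(nat \<Rightarrow> ('a::{field,finite}^'b) set) \<Rightarrow> ('a^'b) set list" where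
  "flag_list U = map (\<lambda>t. U (Suc t)) [0..<CARD('b) - 1]"

definition list_flag :: "('a::{field,finite}^'b) set list \<Rightarrow> nat \<Rightarrow> ('a^'b) set" where
  "list_flag xs = (\<lambda>i. if i \<in> {1..CARD('b) - 1} then xs ! (i - 1) else {})"

lemma flags_chs:
  fixes P :: "nat \<Rightarrow> ('a::{field,finite}^'b) set \<Rightarrow> bool"
  assumes Q: "\<And>U. U \<in> (max_flags :: (nat \<Rightarrow> ('a^'b) set) set) \<Longrightarrow>
      Q U \<longleftrightarrow> (\<forall>t<CARD('b) - 1. P t (U (Suc t)))"
  shows "card {U \<in> (max_flags :: (nat \<Rightarrow> ('a^'b) set) set). Q U} = card (chs P (CARD('b) - 1))"
proof (rule bij_betw_same_card[of flag_list])
  let ?n = "CARD('b) - 1"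
  show "bij_betw flag_list {U \<in> max_flags. Q U} (chs P ?n)"
  proof (rule bij_betwI')
    fix U U' assume U: "U \<in> {U \<in> max_flags. Q U}" and U': "U' \<in> {U \<in> max_flags. Q U}"
    show "(flag_list U = flag_list U') = (U = U')"
    proof
      assume eq: "flag_list U = flag_list U'"
    show "U = U'"
    proof
      fix i
      show "U i = U' i"
      proof (cases "i \<in> {1..?n}")
        case True
        then have "flag_list U ! (i - 1) = U i" "flag_list U' ! (i - 1) = U' i"
          by (auto simp: flag_list_def)
        then show ?thesis using eq by simp
      next
        case False
        then show ?thesis using U U' by (auto simp: max_flags_def)
      qed
    qed
    qed simp
  next
    fix U assume U: "U \<in> {U \<in> max_flags. Q U}"
    then have M: "U \<in> max_flags" and QU: "Q U" by auto
    have UF: "\<forall>i\<in>{1..?n}. vec.subspace (U i) \<and> vec.dim (U i) = i"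
      "\<forall>i\<in>{1..<?n}. U i \<subseteq> U (Suc i)" using M by (auto simp: max_flags_def)
    show "flag_list U \<in> chs P ?n"
      unfolding chs_char
    proof (rule conjI)
      show "length (flag_list U) = ?n" by (simp add: flag_list_def)
    next
      show "\<forall>t<?n. flag_list U ! t \<in> covers_in (prevU (flag_list U) t) UNIV \<and> P t (flag_list U ! t)"
      proof (intro allI impI)
        fix t assume t: "t < ?n"
        have e: "flag_list U ! t = U (Suc t)" using t by (simp add: flag_list_def)
        have pv: "prevU (flag_list U) t = (if t = 0 then {0} else U t)"
          using t by (auto simp: prevU_def flag_list_def)
        have "U (Suc t) \<in> covers_in (prevU (flag_list U) t) UNIV"
        proof (cases "t = 0")
          case True
          then show ?thesis using UF t pv vec.subspace_0[of "U (Suc 0)"]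
            by (auto simp: covers_in_def dim_zero_set)
        next
          case False
          then show ?thesis using UF t pv by (auto simp: covers_in_def)
        qed
        moreover have "P t (U (Suc t))" using Q[OF M] QU t by blast
        ultimately show "flag_list U ! t \<in> covers_in (prevU (flag_list U) t) UNIV \<and> P t (flag_list U ! t)"
          using e by simp
      qed
    qed
  next
    fix xs assume xs: "xs \<in> chs P ?n"
    have len: "length xs = ?n" using xs chs_length by blast
    have C: "\<forall>t<?n. xs ! t \<in> covers_in (prevU xs t) UNIV \<and> P t (xs ! t)" using xs chs_char by blast
    have fl: "flag_list (list_flag xs) = xs"
      by (rule nth_equalityI) (auto simp: flag_list_def list_flag_def len)
    have M: "list_flag xs \<in> max_flags"
      unfolding max_flags_def
    proof (intro CollectI conjI ballI allI impI)
      fix i assume i: "i \<in> {1..?n}"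
      then have "xs ! (i - 1) \<in> covers_in (prevU xs (i - 1)) UNIV" using C by auto
      then show "vec.subspace (list_flag xs i)" using i by (simp add: list_flag_def covers_in_def)
      show "vec.dim (list_flag xs i) = i" using i chs_dim[OF xs, of "i - 1"] by (auto simp: list_flag_def)
    next
      fix i assume i: "i \<in> {1..<?n}"
      then have "xs ! i \<in> covers_in (prevU xs i) UNIV" using C by auto
      then show "list_flag xs i \<subseteq> list_flag xs (Suc i)" using i
        by (simp add: list_flag_def covers_in_def prevU_def)
    next
      fix i assume "i \<notin> {1..?n}"
      then show "list_flag xs i = {}" unfolding list_flag_def by auto
    qed
    moreover have "Q (list_flag xs)"
    proof -
      have "\<forall>t<?n. P t (list_flag xs (Suc t))"
        using C by (simp add: list_flag_def)
      then show ?thesis using Q[OF M] by blast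
    qed
    ultimately show "\<exists>U\<in>{U \<in> max_flags. Q U}. xs = flag_list U" using fl by force
  qed
qed



lemma flag_mono:
  assumes U: "U \<in> (max_flags :: (nat \<Rightarrow> ('a::{field,finite}^'b) set) set)"
    and ab: "1 \<le> a" "a \<le> b" "b \<le> CARD('b) - 1"
  shows "U a \<subseteq> U b"
  using ab(2,3)
proof (induction b rule: dec_induct)
  case base then show ?case by simp
next
  case (step m)
  then have "U m \<subseteq> U (Suc m)" using U ab(1) by (auto simp: max_flags_def)
  then show ?case using step by auto
qed

lemma flag_sub:
  assumes U: "U \<in> (max_flags :: (nat \<Rightarrow> ('a::{field,finite}^'b) set) set)"
    and k: "k \<in> {1..CARD('b) - 1}"
  shows "vec.subspace (U k)" "vec.dim (U k) = k"
  using U k by (auto simp: max_flags_def)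

lemma flag_type_char:
  fixes x :: "'a::{field,finite}^'b"
  assumes U: "U \<in> max_flags" and i: "i \<in> {1..CARD('b)}"
  shows "flag_type (vec.span {x}) U = i \<longleftrightarrow> (\<forall>t<CARD('b) - 1. (x \<in> U (Suc t) \<longleftrightarrow> i \<le> Suc t))"
proof -
  let ?n = "CARD('b) - 1"
  have N: "CARD('b) = Suc ?n" by simp
  have Xk: "vec.span {x} \<subseteq> U k \<longleftrightarrow> x \<in> U k" if "k \<in> {1..?n}" for k
    using sub_span_iff[OF flag_sub(1)[OF U that]] .
  have ex_iff: "(\<exists>k\<in>{1..?n}. vec.span {x} \<subseteq> U k) \<longleftrightarrow> (\<exists>k\<in>{1..?n}. x \<in> U k)"
    using Xk by blast
  have L0: "(\<lambda>k. k \<in> {1..?n} \<and> vec.span {x} \<subseteq> U k) = (\<lambda>k. k \<in> {1..?n} \<and> x \<in> U k)"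
  proof (rule ext)
    fix k show "(k \<in> {1..?n} \<and> vec.span {x} \<subseteq> U k) = (k \<in> {1..?n} \<and> x \<in> U k)"
      using Xk[of k] by blast
  qed
  have L: "(LEAST k. k \<in> {1..?n} \<and> vec.span {x} \<subseteq> U k) = (LEAST k. k \<in> {1..?n} \<and> x \<in> U k)"
    by (simp only: L0)
  have ft: "flag_type (vec.span {x}) U =
      (if \<exists>k\<in>{1..?n}. x \<in> U k then LEAST k. k \<in> {1..?n} \<and> x \<in> U k else CARD('b))"
    by (simp only: flag_type_def ex_iff L)
  show ?thesis
  proof
    assume H: "flag_type (vec.span {x}) U = i"
    show "\<forall>t<?n. (x \<in> U (Suc t) \<longleftrightarrow> i \<le> Suc t)"
    proof (cases "\<exists>k\<in>{1..?n}. x \<in> U k")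
      case True
      then obtain k0 where k0: "k0 \<in> {1..?n}" "x \<in> U k0" by blast
      have iL: "i = (LEAST k. k \<in> {1..?n} \<and> x \<in> U k)" using H True ft by simp
      have iP: "i \<in> {1..?n} \<and> x \<in> U i" unfolding iL by (rule LeastI[of _ k0]) (use k0 in blast)
      show ?thesis
      proof (intro allI impI)
        fix t assume t: "t < ?n"
        show "x \<in> U (Suc t) \<longleftrightarrow> i \<le> Suc t"
        proof
          assume "x \<in> U (Suc t)"
          then have "i \<le> Suc t" unfolding iL using t by (intro Least_le) auto
          then show "i \<le> Suc t" .
        next
          assume "i \<le> Suc t"
          then have "U i \<subseteq> U (Suc t)" using flag_mono[OF U, of i "Suc t"] iP t by auto
          then show "x \<in> U (Suc t)" using iP by auto
        qed
      qed
    next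
      case False
      then have "i = CARD('b)" using H ft by simp
      then show ?thesis using False by auto
    qed
  next
    assume H: "\<forall>t<?n. (x \<in> U (Suc t) \<longleftrightarrow> i \<le> Suc t)"
    show "flag_type (vec.span {x}) U = i"
    proof (cases "i \<le> ?n")
      case True
      have xi: "x \<in> U i" using H[rule_format, of "i - 1"] True i by auto
      have ex: "\<exists>k\<in>{1..?n}. x \<in> U k" using xi True i by auto
      have "(LEAST k. k \<in> {1..?n} \<and> x \<in> U k) = i"
      proof (rule Least_equality)
        show "i \<in> {1..?n} \<and> x \<in> U i" using xi True i by auto
      next
        fix k assume k: "k \<in> {1..?n} \<and> x \<in> U k"
        then show "i \<le> k" using H[rule_format, of "k - 1"] by auto
      qed
      then show ?thesis using ft ex by simp
    next
      case False
      then have iN: "i = CARD('b)" using i by auto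
      have "\<not> (\<exists>k\<in>{1..?n}. x \<in> U k)"
      proof
        assume "\<exists>k\<in>{1..?n}. x \<in> U k"
        then obtain k where k: "k \<in> {1..?n}" "x \<in> U k" by blast
        have cp: "CARD('b) > 0" by simp
        have "k - 1 < ?n" using k cp by auto
        then have "x \<in> U (Suc (k - 1)) \<longleftrightarrow> i \<le> Suc (k - 1)" using H by blast
        then show False using k iN cp by auto
      qed
      then show ?thesis using ft iN by simp
    qed
  qed
qed

lemma flag_type_range:
  assumes U: "U \<in> (max_flags :: (nat \<Rightarrow> ('a::{field,finite}^'b) set) set)"
  shows "flag_type X U \<in> {1..CARD('b)}"
proof (cases "\<exists>k\<in>{1..CARD('b) - 1}. X \<subseteq> U k")
  case True
  then obtain k0 where k0: "k0 \<in> {1..CARD('b) - 1}" "X \<subseteq> U k0" by blast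
  have "(LEAST k. k \<in> {1..CARD('b) - 1} \<and> X \<subseteq> U k) \<in> {1..CARD('b) - 1}"
    using LeastI[of "\<lambda>k. k \<in> {1..CARD('b) - 1} \<and> X \<subseteq> U k" k0] k0 by blast
  then show ?thesis using True unfolding flag_type_def by auto
next
  case False
  then show ?thesis unfolding flag_type_def by simp
qed



lemma dim_UNIV_vec: "vec.dim (UNIV :: ('a::{field,finite}^'b) set) = CARD('b)"
  by (simp add: card_cart_basis)

lemma covers_UNIV_card:
  fixes A :: "('a::{field,finite}^'b) set"
  assumes A: "vec.subspace A"
  shows "card (covers_in A UNIV) = gg CARD('a) (CARD('b) - vec.dim A)"
  using card_covers_in[OF A vec.subspace_UNIV subset_UNIV] by (simp add: card_cart_basis)

lemma covers_with:
  fixes A :: "('a::{field,finite}^'b) set"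
  assumes A: "vec.subspace A" and x: "x \<notin> A"
  shows "{W \<in> covers_in A UNIV. x \<in> W} = {vec.span (insert x A)}"
proof
  show "{W \<in> covers_in A UNIV. x \<in> W} \<subseteq> {vec.span (insert x A)}"
    using cover_unique[OF A _ _ x] by blast
  have "vec.span (insert x A) \<in> covers_in A UNIV"
    using span_insert_cover[OF A vec.subspace_UNIV subset_UNIV _ x] by simp
  moreover have "x \<in> vec.span (insert x A)" by (rule vec.span_base) simp
  ultimately show "{vec.span (insert x A)} \<subseteq> {W \<in> covers_in A UNIV. x \<in> W}" by simp
qed

lemma covers_without_card:
  fixes A :: "('a::{field,finite}^'b) set"
  assumes A: "vec.subspace A" and x: "x \<notin> A"
  shows "card {W \<in> covers_in A UNIV. x \<notin> W} = gg CARD('a) (CARD('b) - vec.dim A) - 1"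
proof -
  have "{W \<in> covers_in A UNIV. x \<notin> W} = covers_in A UNIV - {W \<in> covers_in A UNIV. x \<in> W}" by auto
  also have "\<dots> = covers_in A UNIV - {vec.span (insert x A)}" using covers_with[OF A x] by simp
  finally have e: "{W \<in> covers_in A UNIV. x \<notin> W} = covers_in A UNIV - {vec.span (insert x A)}" .
  have "vec.span (insert x A) \<in> covers_in A UNIV" using covers_with[OF A x] by blast
  then show ?thesis unfolding e
    by (simp add: card_Diff_singleton finite_subset[OF subset_UNIV] covers_UNIV_card[OF A])
qed

lemma covers_contain:
  fixes A :: "('a::{field,finite}^'b) set"
  assumes "x \<in> A"
  shows "{W \<in> covers_in A UNIV. x \<in> W} = covers_in A UNIV"
  using assms by (auto simp: covers_in_def)

lemma span2:
  fixes x y :: "'a::{field,finite}^'b"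
  shows "v \<in> vec.span {x, y} \<longleftrightarrow> (\<exists>a b. v = a *s x + b *s y)"
proof
  assume "v \<in> vec.span {x, y}"
  then obtain a where "v - a *s x \<in> vec.span {y}" using vec.span_breakdown_eq by blast
  then obtain b where "v - a *s x = b *s y" using vec.span_singleton by blast
  then have "v = a *s x + b *s y" by (simp add: algebra_simps)
  then show "\<exists>a b. v = a *s x + b *s y" by blast
next
  assume "\<exists>a b. v = a *s x + b *s y"
  then obtain a b where v: "v = a *s x + b *s y" by blast
  have "x \<in> vec.span {x, y}" "y \<in> vec.span {x, y}" by (auto intro: vec.span_base)
  then show "v \<in> vec.span {x, y}" unfolding v by (intro vec.span_add vec.span_scale)
qed

lemma indep_pair:
  fixes x y :: "'a::{field,finite}^'b"
  assumes x: "x \<noteq> 0" and y: "y \<notin> vec.span {x}" and e: "a *s x + b *s y = 0"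
  shows "a = 0 \<and> b = 0"
proof -
  have b: "b = 0"
  proof (rule ccontr)
    assume b: "b \<noteq> 0"
    have "b *s y = (- a) *s x" using e by (simp add: algebra_simps eq_neg_iff_add_eq_0 vector_smult_lneg)
    then have "inverse b *s (b *s y) = inverse b *s ((- a) *s x)" by simp
    then have "y = (inverse b * - a) *s x" using b by (simp add: vector_smult_assoc)
    then have "y \<in> vec.span {x}" using vec.span_singleton by blast
    then show False using y by simp
  qed
  then have "a *s x = 0" using e by simp
  then have "a = 0" using x by (metis vec.scale_eq_0_iff)
  then show ?thesis using b by simp
qed



lemma covers_avoid_line_card:
  fixes A :: "('a::{field,finite}^'b) set"
  assumes A: "vec.subspace A" and x: "x \<noteq> 0" and y: "y \<notin> vec.span {x}"
    and AL: "A \<inter> vec.span {x, y} = {0}"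
  shows "card {W \<in> covers_in A UNIV. W \<inter> vec.span {x, y} = {0}}
           = gg CARD('a) (CARD('b) - vec.dim A) - gg CARD('a) 2"
proof -
  let ?L = "vec.span {x, y}"
  let ?S = "vec.span (insert x (insert y A))"
  have spA: "vec.span A = A" using A by simp
  have xL: "x \<in> ?L" by (rule vec.span_base) simp
  have yL: "y \<in> ?L" by (rule vec.span_base) simp
  have y0: "y \<noteq> 0"
  proof
    assume "y = 0" then show False using y vec.span_zero[of "{x}"] by simp
  qed
  have yA: "y \<notin> vec.span A"
  proof
    assume "y \<in> vec.span A" then have "y \<in> A \<inter> ?L" using spA yL by simp
    then show False using AL y0 by simp
  qed
  have xA: "x \<notin> vec.span (insert y A)"
  proof
    assume "x \<in> vec.span (insert y A)"
    then obtain k where k: "x - k *s y \<in> vec.span A" using vec.span_breakdown_eq by blast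
    have "x - k *s y \<in> ?L" using xL yL by (intro vec.span_diff vec.span_scale)
    then have "x - k *s y \<in> A \<inter> ?L" using k spA by simp
    then have "x - k *s y = 0" using AL by simp
    then have "1 *s x + (- k) *s y = 0" by (simp add: vector_smult_lneg)
    then have "(1::'a) = 0 \<and> - k = 0 \<or> (- k) = 0 \<and> (1::'a) = 0" using indep_pair[OF x y] by blast
    then show False by simp
  qed
  have dS: "vec.dim ?S = vec.dim A + 2"
    using xA yA by (simp add: vec.dim_insert)
  have AS: "A \<subseteq> ?S" using vec.span_superset[of "insert x (insert y A)"] by auto
  have cS: "card (covers_in A ?S) = gg CARD('a) 2"
    using card_covers_in[OF A vec.subspace_span AS] dS by simp
  have LS: "?L \<subseteq> ?S" by (rule vec.span_mono) auto
  have eq: "{W \<in> covers_in A UNIV. W \<inter> ?L = {0}} = covers_in A UNIV - covers_in A ?S"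
  proof (rule set_eqI, rule iffI)
    fix W assume W: "W \<in> {W \<in> covers_in A UNIV. W \<inter> ?L = {0}}"
    then have W1: "W \<in> covers_in A UNIV" and WL: "W \<inter> ?L = {0}" by auto
    have "W \<notin> covers_in A ?S"
    proof
      assume WS: "W \<in> covers_in A ?S"
      then have Wsub: "vec.subspace W" "A \<subseteq> W" "W \<subseteq> ?S" "vec.dim W = Suc (vec.dim A)"
        by (auto simp: covers_in_def)
      have "W \<noteq> A" using Wsub(4) by auto
      then obtain v where v: "v \<in> W" "v \<notin> A" using Wsub(2) by blast
      have "v \<in> ?S" using v Wsub by auto
      then obtain k1 where k1: "v - k1 *s x \<in> vec.span (insert y A)" using vec.span_breakdown_eq by blast
      then obtain k2 where k2: "v - k1 *s x - k2 *s y \<in> vec.span A" using vec.span_breakdown_eq by blast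
      define l where "l = k1 *s x + k2 *s y"
      have lL: "l \<in> ?L" unfolding l_def using xL yL by (intro vec.span_add vec.span_scale)
      have vl: "v - l \<in> A" using k2 spA by (simp add: l_def algebra_simps)
      have "v - l \<in> W" using vl Wsub(2) by blast
      then have "v - (v - l) \<in> W" using vec.subspace_diff[OF Wsub(1) v(1)] by blast
      then have lW: "l \<in> W" by simp
      have l0: "l \<noteq> 0"
      proof
        assume "l = 0" then show False using vl v by simp
      qed
      have "l \<in> W \<inter> ?L" using lW lL by simp
      then show False using WL l0 by simp
    qed
    then show "W \<in> covers_in A UNIV - covers_in A ?S" using W1 by simp
  next
    fix W assume W: "W \<in> covers_in A UNIV - covers_in A ?S"
    then have W1: "W \<in> covers_in A UNIV" and WS: "W \<notin> covers_in A ?S" by auto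
    have Wsub: "vec.subspace W" "A \<subseteq> W" "vec.dim W = Suc (vec.dim A)"
      using W1 by (auto simp: covers_in_def)
    have "W \<inter> ?L = {0}"
    proof (rule ccontr)
      assume "W \<inter> ?L \<noteq> {0}"
      moreover have "0 \<in> W \<inter> ?L" using Wsub vec.subspace_0 vec.span_zero by auto
      ultimately obtain l where l: "l \<in> W" "l \<in> ?L" "l \<noteq> 0" by blast
      have lA: "l \<notin> A"
      proof
        assume "l \<in> A" then have "l \<in> A \<inter> ?L" using l by simp
        then show False using AL l(3) by simp
      qed
      have "W = vec.span (insert l A)" by (rule cover_unique[OF A W1 l(1) lA])
      also have "\<dots> \<subseteq> ?S" using l(2) LS AS by (intro vec.span_minimal) auto
      finally have "W \<subseteq> ?S" .
      then have "W \<in> covers_in A ?S" using W1 by (auto simp: covers_in_def)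
      then show False using WS by simp
    qed
    then show "W \<in> {W \<in> covers_in A UNIV. W \<inter> ?L = {0}}" using W1 by simp
  qed
  have sub: "covers_in A ?S \<subseteq> covers_in A UNIV" by (auto simp: covers_in_def)
  show ?thesis unfolding eq
    using card_Diff_subset[OF _ sub] cS covers_UNIV_card[OF A]
    by (simp add: finite_subset[OF subset_UNIV])
qed

lemma covers_x_not_y:
  fixes A :: "('a::{field,finite}^'b) set"
  assumes A: "vec.subspace A" and x: "x \<noteq> 0" and y: "y \<notin> vec.span {x}"
    and AL: "A \<inter> vec.span {x, y} = {0}"
  shows "card {W \<in> covers_in A UNIV. x \<in> W \<and> y \<notin> W} = 1"
proof -
  let ?L = "vec.span {x, y}"
  have spA: "vec.span A = A" using A by simp
  have xL: "x \<in> ?L" by (rule vec.span_base) simp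
  have yL: "y \<in> ?L" by (rule vec.span_base) simp
  have xA: "x \<notin> A"
  proof
    assume "x \<in> A" then have "x \<in> A \<inter> ?L" using xL by simp
    then show False using AL x by simp
  qed
  have yn: "y \<notin> vec.span (insert x A)"
  proof
    assume "y \<in> vec.span (insert x A)"
    then obtain k where k: "y - k *s x \<in> vec.span A" using vec.span_breakdown_eq by blast
    have "y - k *s x \<in> ?L" using xL yL by (intro vec.span_diff vec.span_scale)
    then have "y - k *s x \<in> A \<inter> ?L" using k spA by simp
    then have "y - k *s x = 0" using AL by simp
    then have "(- k) *s x + 1 *s y = 0" by (simp add: vector_smult_lneg)
    then have "(1::'a) = 0 \<and> - k = 0 \<or> (- k) = 0 \<and> (1::'a) = 0" using indep_pair[OF x y] by blast
    then show False by simp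
  qed
  have "{W \<in> covers_in A UNIV. x \<in> W \<and> y \<notin> W} = {W \<in> covers_in A UNIV. x \<in> W}"
    using covers_with[OF A xA] yn by auto
  then show ?thesis using covers_with[OF A xA] by simp
qed



fun GG :: "nat \<Rightarrow> nat \<Rightarrow> nat" where
  "GG q 0 = 1"
| "GG q (Suc n) = gg q (Suc n) * GG q n"

lemma Ar0: "(\<Prod>t<n. gg q (n + 1 - t)) = GG q (Suc n)"
proof (induction n)
  case 0 then show ?case by simp
next
  case (Suc n)
  have "(\<Prod>t<Suc n. gg q (Suc n + 1 - t)) = gg q (Suc n + 1) * (\<Prod>t<n. gg q (Suc n + 1 - Suc t))"
    using prod.lessThan_Suc_shift[of "\<lambda>t. gg q (Suc n + 1 - t)" n] by simp
  also have "(\<Prod>t<n. gg q (Suc n + 1 - Suc t)) = (\<Prod>t<n. gg q (n + 1 - t))"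
    by (rule prod.cong) auto
  finally show ?case using Suc by simp
qed

definition f1 :: "nat \<Rightarrow> nat \<Rightarrow> nat \<Rightarrow> nat \<Rightarrow> nat" where
  "f1 q n i t = (if i \<le> t then gg q (n + 1 - t) else if i = Suc t then 1 else q * gg q (n - t))"

lemma Ar1: "i \<in> {1..n+1} \<Longrightarrow> (\<Prod>t<n. f1 q n i t) = q ^ (i - 1) * GG q n"
proof (induction n arbitrary: i)
  case 0 then show ?case by simp
next
  case (Suc n)
  have sh: "(\<Prod>t<Suc n. f1 q (Suc n) i t) = f1 q (Suc n) i 0 * (\<Prod>t<n. f1 q (Suc n) i (Suc t))"
    by (rule prod.lessThan_Suc_shift)
  show ?case
  proof (cases "i = 1")
    case True
    have "(\<Prod>t<n. f1 q (Suc n) i (Suc t)) = (\<Prod>t<n. gg q (n + 1 - t))"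
      by (rule prod.cong) (auto simp: f1_def True)
    then show ?thesis using sh Ar0[where n=n and q=q] True by (simp add: f1_def)
  next
    case False
    then have i2: "i \<ge> 2" using Suc.prems by auto
    have "(\<Prod>t<n. f1 q (Suc n) i (Suc t)) = (\<Prod>t<n. f1 q n (i - 1) t)"
      by (rule prod.cong) (use i2 in \<open>auto simp: f1_def\<close>)
    also have "\<dots> = q ^ (i - 2) * GG q n" 
    proof -
      have "i - 1 \<in> {1..n+1}" using Suc.prems i2 by auto
      from Suc.IH[OF this] show ?thesis by (simp add: numeral_2_eq_2)
    qed
    finally have "(\<Prod>t<Suc n. f1 q (Suc n) i t) = q * gg q (Suc n) * (q ^ (i - 2) * GG q n)"
      using sh i2 by (simp add: f1_def)
    also have "\<dots> = q ^ (i - 1) * GG q (Suc n)"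
    proof -
      have "i - 1 = Suc (i - 2)" using i2 by simp
      then have "q ^ (i - 1) = q * q ^ (i - 2)" by simp
      then show ?thesis by (simp del: gg.simps add: mult_ac)
    qed
    finally show ?thesis .
  qed
qed

definition f2 :: "nat \<Rightarrow> nat \<Rightarrow> nat \<Rightarrow> nat \<Rightarrow> nat \<Rightarrow> nat" where
  "f2 q n i j t = (if Suc t < i then q ^ 2 * gg q (n - 1 - t) else if Suc t = i then 1
     else if Suc t < j then q * gg q (n - t) else if Suc t = j then 1 else gg q (n + 1 - t))"

lemma Ar2: "1 \<le> i \<Longrightarrow> i < j \<Longrightarrow> j \<le> n + 1 \<Longrightarrow> (\<Prod>t<n. f2 q n i j t) = q ^ (i + j - 3) * GG q (n - 1)"
proof (induction n arbitrary: i j)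
  case 0 then show ?case by simp
next
  case (Suc n)
  have sh: "(\<Prod>t<Suc n. f2 q (Suc n) i j t) = f2 q (Suc n) i j 0 * (\<Prod>t<n. f2 q (Suc n) i j (Suc t))"
    by (rule prod.lessThan_Suc_shift)
  show ?case
  proof (cases "i = 1")
    case True
    have "(\<Prod>t<n. f2 q (Suc n) i j (Suc t)) = (\<Prod>t<n. f1 q n (j - 1) t)"
      by (rule prod.cong) (use True Suc.prems in \<open>auto simp: f1_def f2_def\<close>)
    also have "\<dots> = q ^ (j - 2) * GG q n" 
    proof -
      have "j - 1 \<in> {1..n+1}" using Suc.prems by auto
      from Ar1[OF this, of q] show ?thesis by (simp add: numeral_2_eq_2)
    qed
    finally show ?thesis using sh True by (simp add: f2_def)
  next
    case False
    then have i2: "i \<ge> 2" using Suc.prems by auto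
    then obtain m where m: "n = Suc m" using Suc.prems by (cases n) auto
    have "(\<Prod>t<n. f2 q (Suc n) i j (Suc t)) = (\<Prod>t<n. f2 q n (i - 1) (j - 1) t)"
      by (rule prod.cong) (use i2 Suc.prems in \<open>auto simp: f2_def\<close>)
    also have "\<dots> = q ^ (i + j - 5) * GG q (n - 1)" 
    proof -
      have "1 \<le> i - 1" "i - 1 < j - 1" "j - 1 \<le> n + 1" using Suc.prems i2 by auto
      moreover have "i - 1 + (j - 1) - 3 = i + j - 5" using i2 Suc.prems by linarith
      ultimately show ?thesis using Suc.IH by metis
    qed
    finally have "(\<Prod>t<Suc n. f2 q (Suc n) i j t) = q ^ 2 * gg q n * (q ^ (i + j - 5) * GG q (n - 1))"
      using sh i2 by (simp add: f2_def)
    also have "\<dots> = q ^ (i + j - 3) * GG q n"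
    proof -
      have "i + j - 3 = 2 + (i + j - 5)" using i2 Suc.prems by simp
      then have "q ^ (i + j - 3) = q ^ 2 * q ^ (i + j - 5)" by (simp only: power_add)
      then show ?thesis using m by (simp del: gg.simps add: mult_ac)
    qed
    finally show ?thesis by simp
  qed
qed



lemma lastU_inv:
  assumes "xs \<in> chs P k"
  shows "vec.subspace (lastU xs) \<and> vec.dim (lastU xs) = k \<and> (k = 0 \<longrightarrow> lastU xs = {0}) \<and> (k > 0 \<longrightarrow> P (k - 1) (lastU xs))"
proof -
  have "k = 0 \<longrightarrow> lastU xs = {0}"
    using assms chs_length[OF assms] by (auto simp: lastU_def prevU_def)
  then show ?thesis using chs_last[OF assms] by blast
qed

lemma gg_Suc_minus1: "gg q (Suc m) - 1 = q * gg q m" by simp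

lemma count_one:
  fixes x :: "'a::{field,finite}^'b"
  assumes x: "x \<noteq> 0" and i: "i \<in> {1..CARD('b)}"
  shows "card (flags_of_type i (vec.span {x}) :: (nat \<Rightarrow> ('a^'b) set) set)
           = CARD('a) ^ (i - 1) * GG CARD('a) (CARD('b) - 1)"
proof -
  let ?n = "CARD('b) - 1"
  let ?q = "CARD('a)"
  define P :: "nat \<Rightarrow> ('a^'b) set \<Rightarrow> bool" where "P t W = (x \<in> W \<longleftrightarrow> i \<le> Suc t)" for t W
  have "card (flags_of_type i (vec.span {x}) :: (nat \<Rightarrow> ('a^'b) set) set)
      = card {U \<in> (max_flags :: (nat \<Rightarrow> ('a^'b) set) set). flag_type (vec.span {x}) U = i}"
    by (simp add: flags_of_type_def)
  also have "\<dots> = card (chs P ?n)"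
    by (rule flags_chs) (simp add: flag_type_char[OF _ i] P_def)
  also have "\<dots> = (\<Prod>k<?n. f1 ?q ?n i k)"
  proof (rule chs_card)
    fix k xs assume k: "k < ?n" and xs: "xs \<in> chs P k"
    let ?A = "lastU xs"
    have inv: "vec.subspace ?A" "vec.dim ?A = k" "k = 0 \<longrightarrow> ?A = {0}" "k > 0 \<longrightarrow> P (k - 1) ?A"
      using lastU_inv[OF xs] by auto
    have xA: "x \<in> ?A \<longleftrightarrow> i \<le> k"
    proof (cases "k = 0")
      case True then show ?thesis using inv x i by auto
    next
      case False then show ?thesis using inv by (simp add: P_def)
    qed
    have Nk: "CARD('b) - k = Suc (?n - k)" using k by simp
    show "card {W \<in> covers_in ?A UNIV. P k W} = f1 ?q ?n i k"
    proof (cases "i \<le> k")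
      case True
      then have "{W \<in> covers_in ?A UNIV. P k W} = covers_in ?A UNIV"
        using xA by (auto simp: P_def covers_in_def)
      then show ?thesis using covers_UNIV_card[OF inv(1)] True inv(2) k
        by (simp add: f1_def Nk)
    next
      case False
      then have xn: "x \<notin> ?A" using xA by simp
      show ?thesis
      proof (cases "i = Suc k")
        case True
        then have "{W \<in> covers_in ?A UNIV. P k W} = {W \<in> covers_in ?A UNIV. x \<in> W}"
          by (simp add: P_def)
        then show ?thesis using covers_with[OF inv(1) xn] True by (simp add: f1_def)
      next
        case False2: False
        then have "{W \<in> covers_in ?A UNIV. P k W} = {W \<in> covers_in ?A UNIV. x \<notin> W}"
          using False by (auto simp: P_def)
        then show ?thesis using covers_without_card[OF inv(1) xn] False False2 inv(2)
          by (simp add: f1_def Nk del: gg.simps) simp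
      qed
    qed
  qed
  also have "\<dots> = ?q ^ (i - 1) * GG ?q ?n"
    by (rule Ar1) (use i in auto)
  finally show ?thesis .
qed



lemma line_avoid:
  fixes x y :: "'a::{field,finite}^'b"
  assumes U: "U \<in> max_flags" and x: "x \<noteq> 0" and y: "y \<notin> vec.span {x}"
    and i: "1 \<le> i" "i < j" "j \<le> CARD('b)"
    and Hx: "\<forall>t<CARD('b) - 1. (x \<in> U (Suc t) \<longleftrightarrow> i \<le> Suc t)"
    and Hy: "\<forall>t<CARD('b) - 1. (y \<in> U (Suc t) \<longleftrightarrow> j \<le> Suc t)"
    and t: "t < CARD('b) - 1" "Suc t < i"
  shows "U (Suc t) \<inter> vec.span {x, y} = {0}"
proof (rule ccontr)
  let ?n = "CARD('b) - 1"
  assume "U (Suc t) \<inter> vec.span {x, y} \<noteq> {0}"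
  moreover have "0 \<in> U (Suc t)" using flag_sub(1)[OF U, of "Suc t"] t vec.subspace_0 by auto
  moreover have "(0::'a^'b) \<in> vec.span {x, y}" by (rule vec.span_zero)
  ultimately obtain l where l: "l \<in> U (Suc t)" "l \<in> vec.span {x, y}" "l \<noteq> 0" by blast
  obtain a b where ab: "l = a *s x + b *s y" using l(2) span2 by blast
  have iN: "i \<le> ?n" using i by auto
  have sub1: "U (Suc t) \<subseteq> U (i - 1)" using flag_mono[OF U, of "Suc t" "i - 1"] t iN by auto
  have sub2: "U (i - 1) \<subseteq> U i" using flag_mono[OF U, of "i - 1" i] t iN by auto
  have Si: "vec.subspace (U i)" using flag_sub(1)[OF U, of i] iN i by auto
  have "i - 1 \<in> {1..?n}" using iN t by auto
  then have Si1: "vec.subspace (U (i - 1))" using flag_sub(1)[OF U] by blast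
  have e2: "Suc (i - 2) = i - 1" using t by simp
  have "i - 2 < ?n" using t iN by simp
  then have "x \<in> U (Suc (i - 2)) \<longleftrightarrow> i \<le> Suc (i - 2)" using Hx by blast
  then have xi1: "x \<notin> U (i - 1)" using e2 t by simp
  have xi: "x \<in> U i" using Hx[rule_format, of "i - 1"] t iN by auto
  have yi: "y \<notin> U i" using Hy[rule_format, of "i - 1"] t iN i by auto
  show False
  proof (cases "b = 0")
    case True
    then have la: "l = a *s x" using ab by simp
    then have a0: "a \<noteq> 0" using l(3) by auto
    have "inverse a *s l = x" using la a0 by (simp add: vector_smult_assoc)
    moreover have "inverse a *s l \<in> U (i - 1)" using l(1) sub1 vec.subspace_scale[OF Si1] by blast
    ultimately show False using xi1 by simp
  next
    case False
    have "inverse b *s (l - a *s x) = y" using ab False by (simp add: vector_smult_assoc)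
    moreover have "inverse b *s (l - a *s x) \<in> U i"
    proof -
      have "l \<in> U i" using l(1) sub1 sub2 by blast
      moreover have "a *s x \<in> U i" using xi vec.subspace_scale[OF Si] by blast
      ultimately have "l - a *s x \<in> U i" using vec.subspace_diff[OF Si] by blast
      then show ?thesis using vec.subspace_scale[OF Si] by blast
    qed
    ultimately show False using yi by simp
  qed
qed

lemma gg_SS_minus: "gg q (Suc (Suc m)) - gg q 2 = q ^ 2 * gg q m"
  by (simp add: power2_eq_square algebra_simps numeral_2_eq_2)

lemma count_two:
  fixes x y :: "'a::{field,finite}^'b"
  assumes x: "x \<noteq> 0" and y: "y \<notin> vec.span {x}"
    and i: "1 \<le> i" "i < j" "j \<le> CARD('b)"
  shows "card (flags_of_type i (vec.span {x}) \<inter> flags_of_type j (vec.span {y}) :: (nat \<Rightarrow> ('a^'b) set) set)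
           = CARD('a) ^ (i + j - 3) * GG CARD('a) (CARD('b) - 2)"
proof -
  let ?n = "CARD('b) - 1"
  let ?q = "CARD('a)"
  let ?L = "vec.span {x, y}"
  have y0: "y \<noteq> 0"
  proof
    assume "y = 0" then show False using y vec.span_zero[of "{x}"] by simp
  qed
  have xL: "x \<in> ?L" by (rule vec.span_base) simp
  have yL: "y \<in> ?L" by (rule vec.span_base) simp
  define P :: "nat \<Rightarrow> ('a^'b) set \<Rightarrow> bool" where
    "P t W = ((x \<in> W \<longleftrightarrow> i \<le> Suc t) \<and> (y \<in> W \<longleftrightarrow> j \<le> Suc t) \<and> (Suc t < i \<longrightarrow> W \<inter> ?L = {0}))" for t W
  have iI: "i \<in> {1..CARD('b)}" and jI: "j \<in> {1..CARD('b)}" using i by auto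
  have "card (flags_of_type i (vec.span {x}) \<inter> flags_of_type j (vec.span {y}) :: (nat \<Rightarrow> ('a^'b) set) set)
      = card {U \<in> (max_flags :: (nat \<Rightarrow> ('a^'b) set) set). flag_type (vec.span {x}) U = i \<and> flag_type (vec.span {y}) U = j}"
    by (rule arg_cong[where f = card]) (auto simp: flags_of_type_def)
  also have "\<dots> = card (chs P ?n)"
  proof (rule flags_chs)
    fix U :: "nat \<Rightarrow> ('a^'b) set" assume U: "U \<in> max_flags"
    show "(flag_type (vec.span {x}) U = i \<and> flag_type (vec.span {y}) U = j) = (\<forall>t<?n. P t (U (Suc t)))"
    proof
      assume H: "flag_type (vec.span {x}) U = i \<and> flag_type (vec.span {y}) U = j"
      have Hx: "\<forall>t<?n. (x \<in> U (Suc t) \<longleftrightarrow> i \<le> Suc t)" using H flag_type_char[OF U iI] by blast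
      have Hy: "\<forall>t<?n. (y \<in> U (Suc t) \<longleftrightarrow> j \<le> Suc t)" using H flag_type_char[OF U jI] by blast
      show "\<forall>t<?n. P t (U (Suc t))"
        unfolding P_def using Hx Hy line_avoid[OF U x y i Hx Hy] by blast
    next
      assume H: "\<forall>t<?n. P t (U (Suc t))"
      then have Hx: "\<forall>t<?n. (x \<in> U (Suc t) \<longleftrightarrow> i \<le> Suc t)"
        and Hy: "\<forall>t<?n. (y \<in> U (Suc t) \<longleftrightarrow> j \<le> Suc t)" unfolding P_def by blast+
      show "flag_type (vec.span {x}) U = i \<and> flag_type (vec.span {y}) U = j"
        using flag_type_char[OF U iI] flag_type_char[OF U jI] Hx Hy by blast
    qed
  qed
  also have "\<dots> = (\<Prod>k<?n. f2 ?q ?n i j k)"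
  proof (rule chs_card)
    fix k xs assume k: "k < ?n" and xs: "xs \<in> chs P k"
    let ?A = "lastU xs"
    have inv: "vec.subspace ?A" "vec.dim ?A = k" "k = 0 \<longrightarrow> ?A = {0}" "k > 0 \<longrightarrow> P (k - 1) ?A"
      using lastU_inv[OF xs] by auto
    have xA: "x \<in> ?A \<longleftrightarrow> i \<le> k"
    proof (cases "k = 0")
      case True then show ?thesis using inv x i by auto
    next
      case False then show ?thesis using inv by (simp add: P_def)
    qed
    have yA: "y \<in> ?A \<longleftrightarrow> j \<le> k"
    proof (cases "k = 0")
      case True then show ?thesis using inv y0 i by auto
    next
      case False then show ?thesis using inv by (simp add: P_def)
    qed
    have AL: "k < i \<Longrightarrow> ?A \<inter> ?L = {0}"
    proof (cases "k = 0")
      case True then show ?thesis using inv vec.span_zero[of "{x, y}"] by auto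
    next
      case False then show "k < i \<Longrightarrow> ?A \<inter> ?L = {0}" using inv by (simp add: P_def)
    qed
    have Nk: "CARD('b) - k = Suc (?n - k)" using k by simp
    show "card {W \<in> covers_in ?A UNIV. P k W} = f2 ?q ?n i j k"
    proof (cases "Suc k < i")
      case True
      have "{W \<in> covers_in ?A UNIV. P k W} = {W \<in> covers_in ?A UNIV. W \<inter> ?L = {0}}"
      proof (rule Collect_cong, rule conj_cong[OF refl])
        fix W
        show "P k W = (W \<inter> ?L = {0})"
        proof
          assume "P k W" then show "W \<inter> ?L = {0}" using True by (simp add: P_def)
        next
          assume WL: "W \<inter> ?L = {0}"
          have "x \<notin> W"
          proof
            assume "x \<in> W" then have "x \<in> W \<inter> ?L" using xL by simp
            then show False using WL x by simp
          qed
          moreover have "y \<notin> W"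
          proof
            assume "y \<in> W" then have "y \<in> W \<inter> ?L" using yL by simp
            then show False using WL y0 by simp
          qed
          ultimately show "P k W" using True i WL by (simp add: P_def)
        qed
      qed
      moreover have "CARD('b) - k = Suc (Suc (?n - 1 - k))" using True k i by simp
      ultimately show ?thesis
        using covers_avoid_line_card[OF inv(1) x y AL] True inv(2) gg_SS_minus
        by (simp add: f2_def del: gg.simps)
    next
      case False
      show ?thesis
      proof (cases "Suc k = i")
        case True
        then have "{W \<in> covers_in ?A UNIV. P k W} = {W \<in> covers_in ?A UNIV. x \<in> W \<and> y \<notin> W}"
          using i by (auto simp: P_def)
        then show ?thesis using covers_x_not_y[OF inv(1) x y AL] True by (simp add: f2_def)
      next
        case False2: False
        then have xin: "x \<in> ?A" using False xA by simp
        show ?thesis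
        proof (cases "Suc k < j")
          case True
          then have yn: "y \<notin> ?A" using yA by simp
          have "{W \<in> covers_in ?A UNIV. P k W} = {W \<in> covers_in ?A UNIV. y \<notin> W}"
            using False False2 True xin by (auto simp: P_def covers_in_def)
          then show ?thesis using covers_without_card[OF inv(1) yn] False False2 True inv(2)
            by (simp add: f2_def Nk del: gg.simps) simp
        next
          case False3: False
          show ?thesis
          proof (cases "Suc k = j")
            case True
            then have yn: "y \<notin> ?A" using yA by simp
            have "{W \<in> covers_in ?A UNIV. P k W} = {W \<in> covers_in ?A UNIV. y \<in> W}"
              using False False2 True xin by (auto simp: P_def covers_in_def)
            then show ?thesis using covers_with[OF inv(1) yn] False False2 True
              by (simp add: f2_def)
          next
            case False4: False
            then have yin: "y \<in> ?A" using False3 yA by simp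
            have "{W \<in> covers_in ?A UNIV. P k W} = covers_in ?A UNIV"
              using False False2 False3 False4 xin yin by (auto simp: P_def covers_in_def)
            then show ?thesis using covers_UNIV_card[OF inv(1)] False False2 False3 False4 inv(2)
              by (simp add: f2_def Nk del: gg.simps)
          qed
        qed
      qed
    qed
  qed
  also have "\<dots> = ?q ^ (i + j - 3) * GG ?q (?n - 1)"
    by (rule Ar2) (use i in auto)
  finally show ?thesis by (simp add: numeral_2_eq_2)
qed



lemma max_flags_finite: "finite (max_flags :: (nat \<Rightarrow> ('a::{field,finite}^'b) set) set)"
proof -
  let ?n = "CARD('b) - 1"
  have "(max_flags :: (nat \<Rightarrow> ('a^'b) set) set) \<subseteq> list_flag ` {xs. set xs \<subseteq> UNIV \<and> length xs = ?n}"
  proof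
    fix U :: "nat \<Rightarrow> ('a^'b) set" assume U: "U \<in> max_flags"
    have "U = list_flag (flag_list U)"
    proof
      fix i show "U i = list_flag (flag_list U) i"
        using U by (cases "i \<in> {1..?n}") (auto simp: list_flag_def flag_list_def max_flags_def)
    qed
    moreover have "flag_list U \<in> {xs. set xs \<subseteq> UNIV \<and> length xs = ?n}" by (simp add: flag_list_def)
    ultimately show "U \<in> list_flag ` {xs. set xs \<subseteq> UNIV \<and> length xs = ?n}" by blast
  qed
  moreover have "finite {xs. set xs \<subseteq> (UNIV :: ('a^'b) set set) \<and> length xs = ?n}"
    by (rule finite_lists_length_eq) simp
  ultimately show ?thesis using finite_subset by blast
qed

lemma GG_pg_c:
  assumes q: "q \<ge> 2"
  shows "pg_c q k = GG q (Suc k)"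
proof -
  have v: "pg_v q m = gg q (m + 1)" for m
  proof -
    have "(q - 1) * gg q (m + 1) = q ^ (m + 1) - 1" using gg_eq[of q "m + 1"] q by simp
    moreover have "q - 1 > 0" using q by simp
    ultimately show ?thesis unfolding pg_v_def by (metis nonzero_mult_div_cancel_left less_irrefl)
  qed
  show ?thesis
  proof (induction k)
    case 0 then show ?case by (simp add: pg_c_def)
  next
    case (Suc k)
    have "pg_c q (Suc k) = pg_c q k * pg_v q (Suc k)" by (simp add: pg_c_def)
    then show ?case using Suc v by simp
  qed
qed

lemma gg_sum: "gg q m = (\<Sum>t<m. q ^ t)"
proof (induction m)
  case 0 then show ?case by simp
next
  case (Suc m)
  have "(\<Sum>t<Suc m. q ^ t) = q ^ 0 + (\<Sum>t<m. q ^ Suc t)" by (rule sum.lessThan_Suc_shift)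
  also have "\<dots> = 1 + q * (\<Sum>t<m. q ^ t)" by (simp add: sum_distrib_left)
  finally show ?case using Suc by simp
qed

lemma gg_sum1: "real (gg q m) = (\<Sum>j\<in>{1..m}. real q ^ (j - 1))"
proof -
  have "(\<Sum>j\<in>{1..m}. real q ^ (j - 1)) = (\<Sum>t<m. real q ^ t)"
    using sum.atLeast1_atMost_eq[of "\<lambda>j. real q ^ (j - 1)" m] by simp
  then show ?thesis by (simp add: gg_sum)
qed

lemma powi_split:
  fixes r :: real
  assumes "r \<noteq> 0" "1 \<le> i" "1 \<le> j" "3 \<le> i + j"
  shows "r ^ (i + j - 3) = r powi (int i - 2) * r ^ (j - 1)"
proof -
  have "int i - 2 + int (j - 1) = int (i + j - 3)" using assms by simp
  then have "r powi (int i - 2) * r powi int (j - 1) = r powi int (i + j - 3)"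
    using power_int_add[of r "int i - 2" "int (j - 1)"] assms(1) by simp
  then show ?thesis by simp
qed

lemma powi_mult:
  fixes r :: real
  assumes "r \<noteq> 0" "1 \<le> i"
  shows "r powi (int i - 2) * r = r ^ (i - 1)"
proof -
  have "r powi (int i - 2) * r = r powi (int i - 2 + 1)"
    using power_int_add_1[of r "int i - 2"] assms(1) by simp
  also have "int i - 2 + 1 = int (i - 1) - 0 - 0 + 0" using assms by simp
  finally show ?thesis by simp
qed

lemma card_partition_type:
  fixes A :: "(nat \<Rightarrow> ('a::{field,finite}^'b) set) set"
  assumes A: "A \<subseteq> max_flags"
  shows "card A = (\<Sum>j\<in>{1..CARD('b)}. card (A \<inter> flags_of_type j Y))"
proof -
  have fA: "finite A" using finite_subset[OF A max_flags_finite] .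
  have "A = (\<Union>j\<in>{1..CARD('b)}. A \<inter> flags_of_type j Y)"
  proof
    show "A \<subseteq> (\<Union>j\<in>{1..CARD('b)}. A \<inter> flags_of_type j Y)"
    proof
      fix U assume U: "U \<in> A"
      then have M: "U \<in> max_flags" using A by blast
      have "flag_type Y U \<in> {1..CARD('b)}" by (rule flag_type_range[OF M])
      then show "U \<in> (\<Union>j\<in>{1..CARD('b)}. A \<inter> flags_of_type j Y)"
        using U M by (auto simp: flags_of_type_def)
    qed
  qed auto
  then have "card A = card (\<Union>j\<in>{1..CARD('b)}. A \<inter> flags_of_type j Y)" by simp
  also have "\<dots> = (\<Sum>j\<in>{1..CARD('b)}. card (A \<inter> flags_of_type j Y))"
    by (rule card_UN_disjoint) (use fA in \<open>auto simp: flags_of_type_def\<close>)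
  finally show ?thesis .
qed



lemma alg_final:
  fixes A C c p G P g r :: real
  assumes "A = C + c * p * (G - P)" "A = P * g * c" "G = 1 + r * g" "P = p * r"
  shows "C = c * p * (P - 1)"
  using assms by algebra

theorem mainTheorem5:
  fixes X Y :: "('a::{field,finite} ^ 'b) set" and n i j :: nat
  defines "q \<equiv> CARD('a)"
  assumes n: "CARD('b) = n + 1" and n2: "n \<ge> 2"
    and i: "i \<in> {1..n+1}" and j: "j \<in> {1..n+1}"
    and X: "X \<in> pg_points" and Y: "Y \<in> pg_points"
  shows "real (card (flags_of_type i X \<inter> flags_of_type j Y)) =
    (if X = Y
     then (if i = j then 1 else 0) * real (pg_c q (n - 1)) * real q ^ (i - 1)
     else real (pg_c q (n - 2)) * real q powi (int i - 2)
            * (real q ^ (j - 1) - (if i = j then 1 else 0)))"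
proof -
  obtain x where x: "x \<noteq> 0" "X = vec.span {x}" using point_obtain[OF X] by blast
  obtain y where y: "y \<noteq> 0" "Y = vec.span {y}" using point_obtain[OF Y] by blast
  have q2: "q \<ge> 2" unfolding q_def by (rule card_field_ge2)
  define r where "r = real q"
  have r0: "r \<noteq> 0" using q2 by (simp add: r_def)
  have c1: "pg_c q (n - 1) = GG q n" using GG_pg_c[OF q2, of "n - 1"] n2 by simp
  have c2: "pg_c q (n - 2) = GG q (n - 1)" using GG_pg_c[OF q2, of "n - 2"] n2
    by (simp add: Suc_diff_Suc numeral_2_eq_2)
  have GGn: "GG q n = gg q n * GG q (n - 1)"
    using n2 GG.simps(2)[of q "n - 1"] by (simp add: Suc_diff_Suc)
  have nb: "CARD('b) - 1 = n" "CARD('b) - 2 = n - 1" using n by auto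
  have iN: "i \<in> {1..CARD('b)}" using i n by simp
  have jN: "j \<in> {1..CARD('b)}" using j n by simp
  have one: "card (flags_of_type k X :: (nat \<Rightarrow> ('a^'b) set) set) = q ^ (k - 1) * GG q n"
    if "k \<in> {1..CARD('b)}" for k
    using count_one[OF x(1) that] x(2) nb by (simp add: q_def)
  show ?thesis
  proof (cases "X = Y")
    case True
    show ?thesis
    proof (cases "i = j")
      case True2: True
      then show ?thesis using True one[OF iN] c1 by (simp add: mult_ac)
    next
      case False
      have "flags_of_type i X \<inter> flags_of_type j Y = ({} :: (nat \<Rightarrow> ('a^'b) set) set)"
        using True False by (auto simp: flags_of_type_def)
      then show ?thesis using True False by simp
    qed
  next
    case False
    have dX: "vec.dim X = 1" and dY: "vec.dim Y = 1" and sX: "vec.subspace X" and sY: "vec.subspace Y"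
      using X Y by (auto simp: pg_points_def)
    have yx: "y \<notin> vec.span {x}"
    proof
      assume "y \<in> vec.span {x}"
      then have "Y \<subseteq> X" using sub_span_iff[OF vec.subspace_span, of y "{x}"] x y by simp
      then have "Y = X" using vec.subspace_dim_equal[OF sY sX] dX dY by simp
      then show False using False by simp
    qed
    have xy: "x \<notin> vec.span {y}"
    proof
      assume "x \<in> vec.span {y}"
      then have "X \<subseteq> Y" using sub_span_iff[OF vec.subspace_span, of x "{y}"] x y by simp
      then have "X = Y" using vec.subspace_dim_equal[OF sX sY] dX dY by simp
      then show False using False by simp
    qed
    have two: "real (card (flags_of_type k X \<inter> flags_of_type l Y :: (nat \<Rightarrow> ('a^'b) set) set))
        = real (GG q (n - 1)) * (r powi (int k - 2) * r ^ (l - 1))"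
      if k: "k \<in> {1..CARD('b)}" and l: "l \<in> {1..CARD('b)}" and kl: "k \<noteq> l" for k l
    proof (cases "k < l")
      case True
      have "card (flags_of_type k X \<inter> flags_of_type l Y :: (nat \<Rightarrow> ('a^'b) set) set)
          = q ^ (k + l - 3) * GG q (n - 1)"
        using count_two[OF x(1) yx, of k l] k l True x(2) y(2) nb by (simp add: q_def)
      moreover have "r ^ (k + l - 3) = r powi (int k - 2) * r ^ (l - 1)"
        by (rule powi_split) (use r0 k l True in auto)
      ultimately show ?thesis by (simp add: r_def mult_ac)
    next
      case False
      then have lk: "l < k" using kl by simp
      have "card (flags_of_type k X \<inter> flags_of_type l Y :: (nat \<Rightarrow> ('a^'b) set) set)
          = card (flags_of_type l Y \<inter> flags_of_type k X :: (nat \<Rightarrow> ('a^'b) set) set)"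
        by (simp add: Int_commute)
      also have "\<dots> = q ^ (l + k - 3) * GG q (n - 1)"
        using count_two[OF y(1) xy, of l k] k l lk x(2) y(2) nb by (simp add: q_def)
      finally have "card (flags_of_type k X \<inter> flags_of_type l Y :: (nat \<Rightarrow> ('a^'b) set) set)
          = q ^ (k + l - 3) * GG q (n - 1)" by (simp add: add.commute)
      moreover have "r ^ (k + l - 3) = r powi (int k - 2) * r ^ (l - 1)"
        by (rule powi_split) (use r0 k l lk in auto)
      ultimately show ?thesis by (simp add: r_def mult_ac)
    qed
    show ?thesis
    proof (cases "i = j")
      case False2: False
      then show ?thesis using two[OF iN jN False2] False c2 by (simp add: r_def mult_ac)
    next
      case True
      let ?C = "\<lambda>l. real (card (flags_of_type i X \<inter> flags_of_type l Y :: (nat \<Rightarrow> ('a^'b) set) set))"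
      have sub: "(flags_of_type i X :: (nat \<Rightarrow> ('a^'b) set) set) \<subseteq> max_flags"
        by (auto simp: flags_of_type_def)
      have "real (card (flags_of_type i X :: (nat \<Rightarrow> ('a^'b) set) set)) = (\<Sum>l\<in>{1..CARD('b)}. ?C l)"
        using card_partition_type[OF sub, of Y] by simp
      also have "\<dots> = ?C i + (\<Sum>l\<in>{1..CARD('b)} - {i}. ?C l)"
        by (rule sum.remove) (use iN in auto)
      also have "(\<Sum>l\<in>{1..CARD('b)} - {i}. ?C l)
          = (\<Sum>l\<in>{1..CARD('b)} - {i}. real (GG q (n - 1)) * r powi (int i - 2) * r ^ (l - 1))"
        by (rule sum.cong) (use two iN in \<open>auto simp: mult_ac\<close>)
      also have "\<dots> = real (GG q (n - 1)) * r powi (int i - 2) * (\<Sum>l\<in>{1..CARD('b)} - {i}. r ^ (l - 1))"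
        by (simp add: sum_distrib_left)
      also have "(\<Sum>l\<in>{1..CARD('b)} - {i}. r ^ (l - 1)) = (\<Sum>l\<in>{1..CARD('b)}. r ^ (l - 1)) - r ^ (i - 1)"
        using sum.remove[of "{1..CARD('b)}" i "\<lambda>l. r ^ (l - 1)"] iN by simp
      also have "(\<Sum>l\<in>{1..CARD('b)}. r ^ (l - 1)) = real (gg q (Suc n))"
        using gg_sum1[of q "CARD('b)"] n by (simp add: r_def)
      finally have E: "real (card (flags_of_type i X :: (nat \<Rightarrow> ('a^'b) set) set))
          = ?C i + real (GG q (n - 1)) * r powi (int i - 2) * (real (gg q (Suc n)) - r ^ (i - 1))" .
      have E1: "real (card (flags_of_type i X :: (nat \<Rightarrow> ('a^'b) set) set)) = r ^ (i - 1) * real (gg q n) * real (GG q (n - 1))"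
        using one[OF iN] GGn by (simp add: r_def)
      have E2: "real (gg q (Suc n)) = 1 + r * real (gg q n)" by (simp add: r_def)
      have E3: "r ^ (i - 1) = r powi (int i - 2) * r" using powi_mult[OF r0, of i] iN by simp
      have "?C i = real (GG q (n - 1)) * r powi (int i - 2) * (r ^ (i - 1) - 1)"
        by (rule alg_final[OF E E1 E2 E3])
      then show ?thesis using False True c2 by (simp add: r_def)
    qed
  qed
qed

end
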